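(* Let $\nu$ be a charge on $\mathbb{C}$ satisfying the Blaschke condition near infinity in $\mathbb{C}^{\mathrm{up}}$ (i.e. $\int_{\mathbb{C}^{\mathrm{up}}\setminus D(r_0)}\operatorname{Im}\frac1{\bar z}\,d|\nu|(z)<+\infty$ for some $r_0>0$), and let $\nu^{\mathrm{bal}}$ be its balayage from $\mathbb{C}^{\mathrm{up}}$. If $g\colon[0,+\infty)\to[0,+\infty)$ satisfies $g(r)>r$ for all $r>0$, then for every $r>0$ $$|\nu^{\mathrm{bal}}|(\overline D(r))\le|\nu|\bigl(\overline D(g(r))\bigr)+\frac{2r\,g^2(r)}{\pi(g(r)-r)^2}\int_{|z|\ge g(r)}\Bigl|\operatorname{Im}\frac1z\Bigr|\,d|\nu|(z).$$ If $\nu$ is of finite type at order $p\ge0$ near $\infty$ (i.e. $\limsup_{r\to+\infty}|\nu|(\overline D(r))/r^p<+\infty$), then $\nu^{\mathrm{bal}}$ is also of finite type at order $p$, and for $p\ge1$ $$\limsup_{r\to+\infty}\frac{|\nu^{\mathrm{bal}}|(\overline D(r))}{r^p}\le\limsup_{r\to+\infty}\frac{|\nu|(\overline D(r))}{r^p}.$$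
   Context: A charge on $\mathbb{C}$ is a countably additive function on Borel sets with values in $[-\infty,+\infty]$, finite on compact sets; $|\nu|$ is its total variation. $D(r)$, $\overline D(r)$: open/closed discs of radius $r$ centred at $0$. $\mathbb{C}^{\mathrm{up}}=\{\operatorname{Im}z>0\}$, $\mathbb{C}_{\overline{\mathrm{lw}}}=\{\operatorname{Im}z\le0\}$. Harmonic measure: $\omega(z,B)=\frac1\pi\int_{B\cap\mathbb{R}}\frac{\operatorname{Im}z}{(t-\operatorname{Re}z)^2+(\operatorname{Im}z)^2}dt$ for $z\in\mathbb{C}^{\mathrm{up}}$. Balayage from $\mathbb{C}^{\mathrm{up}}$: $\nu^{\mathrm{bal}}(B)=\int_{\mathbb{C}^{\mathrm{up}}}\omega(z,B)\,d\nu(z)+\nu(B\cap\mathbb{C}_{\overline{\mathrm{lw}}})$. *)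

theory Defs
  imports "HOL-Analysis.Analysis"
begin

text \<open>A charge on the complex plane is represented by its Jordan decomposition:
  two mutually singular positive Borel measures, both finite on compact sets.
  The charge is nu = Mp - Mn and its total variation is |nu| = Mp + Mn.\<close>

definition is_charge :: "complex measure \<Rightarrow> complex measure \<Rightarrow> bool" where
  "is_charge Mp Mn \<longleftrightarrow>
     sets Mp = sets borel \<and> sets Mn = sets borel \<and>
     (\<forall>K. compact K \<longrightarrow> emeasure Mp K < \<infinity> \<and> emeasure Mn K < \<infinity>) \<and>
     (\<exists>A \<in> sets borel. emeasure Mp (- A) = 0 \<and> emeasure Mn A = 0)"

definition absmeas :: "complex measure \<Rightarrow> complex measure \<Rightarrow> complex set \<Rightarrow> ennreal" where
  "absmeas Mp Mn B = emeasure Mp B + emeasure Mn B"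

definition abs_nn_integral ::
  "complex measure \<Rightarrow> complex measure \<Rightarrow> (complex \<Rightarrow> ennreal) \<Rightarrow> ennreal" where
  "abs_nn_integral Mp Mn f = (\<integral>\<^sup>+ z. f z \<partial>Mp) + (\<integral>\<^sup>+ z. f z \<partial>Mn)"

definition upper_half :: "complex set" where
  "upper_half = {z. Im z > 0}"

definition closed_lower_half :: "complex set" where
  "closed_lower_half = {z. Im z \<le> 0}"

definition harm_meas :: "complex \<Rightarrow> complex set \<Rightarrow> ennreal" where
  "harm_meas z B = ennreal (1 / pi) *
     (\<integral>\<^sup>+ t \<in> {t. complex_of_real t \<in> B}.
        ennreal (Im z / ((t - Re z)\<^sup>2 + (Im z)\<^sup>2)) \<partial>lborel)"

definition bal_pos :: "complex measure \<Rightarrow> complex set \<Rightarrow> ennreal" where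
  "bal_pos M B = (\<integral>\<^sup>+ z \<in> upper_half. harm_meas z B \<partial>M) + emeasure M (B \<inter> closed_lower_half)"

definition bal_charge :: "complex measure \<Rightarrow> complex measure \<Rightarrow> complex set \<Rightarrow> ereal" where
  "bal_charge Mp Mn B = enn2ereal (bal_pos Mp B) - enn2ereal (bal_pos Mn B)"

definition tot_var :: "(complex set \<Rightarrow> ereal) \<Rightarrow> complex set \<Rightarrow> ereal" where
  "tot_var \<mu> B = (SUP P \<in> {P. finite P \<and> disjoint P \<and> \<Union>P = B \<and> P \<subseteq> sets borel}.
                    \<Sum>A\<in>P. \<bar>\<mu> A\<bar>)"

definition blaschke_upper :: "complex measure \<Rightarrow> complex measure \<Rightarrow> bool" where
  "blaschke_upper Mp Mn \<longleftrightarrow> (\<exists>r0>0.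
     abs_nn_integral Mp Mn (\<lambda>z. indicator (upper_half - ball 0 r0) z * ennreal (Im (1 / cnj z))) < \<infinity>)"

end

theory Submission
  imports Defs
begin


lemma poisson_has:
  fixes x y a b :: real
  assumes y: "y > 0" and ab: "a \<le> b"
  shows "has_bochner_integral lborel (\<lambda>t. y / ((t - x)\<^sup>2 + y\<^sup>2) * indicator {a..b} t)
           (arctan ((b - x) / y) - arctan ((a - x) / y))"
proof (rule has_bochner_integral_FTC_Icc_real[OF ab])
  fix t assume "a \<le> t" "t \<le> b"
  have pos: "(t - x)\<^sup>2 + y\<^sup>2 > 0" using y by (simp add: add_nonneg_pos)
  have "((\<lambda>t. arctan ((t - x) / y)) has_real_derivative
          (1 / (1 + ((t - x) / y)\<^sup>2)) * (1 / y)) (at t)"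
    using y by (auto intro!: derivative_eq_intros simp: field_simps)
  moreover have "(1 / (1 + ((t - x) / y)\<^sup>2)) * (1 / y) = y / ((t - x)\<^sup>2 + y\<^sup>2)"
    using y pos by (simp add: field_simps power2_eq_square)
  ultimately show "((\<lambda>t. arctan ((t - x) / y)) has_real_derivative y / ((t - x)\<^sup>2 + y\<^sup>2)) (at t)"
    by simp
  show "isCont (\<lambda>t. y / ((t - x)\<^sup>2 + y\<^sup>2)) t"
    using pos by (auto intro!: continuous_intros)
qed

lemma poisson_le:
  fixes x y :: real
  assumes y: "y > 0"
  shows "(\<integral>\<^sup>+ t. ennreal (y / ((t - x)\<^sup>2 + y\<^sup>2)) \<partial>lborel) \<le> ennreal pi"
proof -
  let ?f = "\<lambda>t. y / ((t - x)\<^sup>2 + y\<^sup>2)"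
  let ?g = "\<lambda>(n::nat) t. ennreal (?f t * indicator {- real n..real n} t)"
  have nn: "\<And>t. ?f t \<ge> 0" using y by simp
  have sup: "(SUP n. ?g n t) = ennreal (?f t)" for t
  proof (rule LIMSEQ_unique[OF LIMSEQ_SUP])
    show "incseq (\<lambda>n. ?g n t)"
      using nn by (auto simp: incseq_def intro!: ennreal_leI split: split_indicator)
    obtain n where "\<bar>t\<bar> < real n" using reals_Archimedean2 by blast
    then have "\<forall>m\<ge>n. ?g m t = ennreal (?f t)"
      by (auto split: split_indicator)
    then have "eventually (\<lambda>m. ?g m t = ennreal (?f t)) sequentially"
      unfolding eventually_sequentially by blast
    then show "(\<lambda>n. ?g n t) \<longlonglongrightarrow> ennreal (?f t)" by (rule tendsto_eventually)
  qed
  have "(\<integral>\<^sup>+ t. ennreal (?f t) \<partial>lborel) = (\<integral>\<^sup>+ t. (SUP n. ?g n t) \<partial>lborel)"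
    by (simp only: sup)
  also have "\<dots> = (SUP n. \<integral>\<^sup>+ t. ?g n t \<partial>lborel)"
    by (rule nn_integral_monotone_convergence_SUP)
       (use nn in \<open>auto simp: incseq_def le_fun_def intro!: ennreal_leI split: split_indicator\<close>)
  also have "\<dots> \<le> ennreal pi"
  proof (rule SUP_least)
    fix n :: nat
    have hb: "has_bochner_integral lborel (\<lambda>t. ?f t * indicator {- real n..real n} t)
           (arctan ((real n - x) / y) - arctan ((- real n - x) / y))"
      by (rule poisson_has[OF y]) simp
    have "(\<integral>\<^sup>+ t. ?g n t \<partial>lborel) = ennreal (arctan ((real n - x) / y) - arctan ((- real n - x) / y))"
      using hb nn by (subst nn_integral_eq_integral)
         (auto simp: has_bochner_integral_iff split: split_indicator)
    also have "\<dots> \<le> ennreal pi"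
      using arctan_bounded[of "(real n - x) / y"] arctan_bounded[of "(- real n - x) / y"]
      by (intro ennreal_leI) simp
    finally show "(\<integral>\<^sup>+ t. ?g n t \<partial>lborel) \<le> ennreal pi" .
  qed
  finally show ?thesis .
qed

lemma harm_le1:
  assumes "Im z > 0"
  shows "harm_meas z B \<le> 1"
proof -
  have "(\<integral>\<^sup>+ t \<in> {t. complex_of_real t \<in> B}. ennreal (Im z / ((t - Re z)\<^sup>2 + (Im z)\<^sup>2)) \<partial>lborel)
        \<le> (\<integral>\<^sup>+ t. ennreal (Im z / ((t - Re z)\<^sup>2 + (Im z)\<^sup>2)) \<partial>lborel)"
    by (intro nn_integral_mono) (auto split: split_indicator)
  also have "\<dots> \<le> ennreal pi" by (rule poisson_le[OF assms])
  finally have "harm_meas z B \<le> ennreal (1/pi) * ennreal pi"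
    unfolding harm_meas_def by (intro mult_left_mono) auto
  also have "\<dots> = 1" by (simp add: ennreal_mult'[symmetric])
  finally show ?thesis .
qed


lemma cball_real_set: "{t::real. complex_of_real t \<in> cball 0 r} = {-r..r}"
  by (auto simp: dist_norm)

lemma poisson_pt_bound:
  fixes z :: complex and t r g :: real
  assumes y: "Im z > 0" and r: "0 < r" "r < g" and gz: "g \<le> cmod z" and t: "\<bar>t\<bar> \<le> r"
  shows "Im z / ((t - Re z)\<^sup>2 + (Im z)\<^sup>2) \<le> Im z * g\<^sup>2 / ((cmod z)\<^sup>2 * (g - r)\<^sup>2)"
proof -
  have D: "(t - Re z)\<^sup>2 + (Im z)\<^sup>2 = (cmod (z - complex_of_real t))\<^sup>2"
    by (simp only: cmod_power2) (simp add: power2_eq_square algebra_simps)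
  have "cmod (z - complex_of_real t) \<ge> cmod z - \<bar>t\<bar>"
    using norm_triangle_ineq2[of z "complex_of_real t"] by simp
  then have c1: "cmod (z - complex_of_real t) \<ge> cmod z - r" using t by simp
  have "cmod z - r - cmod z * (g - r) / g = r * (cmod z - g) / g"
    using r by (simp add: field_simps)
  also have "\<dots> \<ge> 0" using r gz by simp
  finally have c2: "cmod z - r \<ge> cmod z * (g - r) / g" by simp
  have p: "cmod z * (g - r) / g > 0" using r gz by (intro divide_pos_pos mult_pos_pos) auto
  have "(cmod z * (g - r) / g)\<^sup>2 \<le> (cmod (z - complex_of_real t))\<^sup>2"
    using c1 c2 p by (intro power_mono) auto
  then have le: "(cmod z)\<^sup>2 * (g - r)\<^sup>2 / g\<^sup>2 \<le> (t - Re z)\<^sup>2 + (Im z)\<^sup>2"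
    unfolding D by (simp add: power_divide power_mult_distrib)
  have "(cmod z)\<^sup>2 * (g - r)\<^sup>2 / g\<^sup>2 = (cmod z * (g - r) / g)\<^sup>2"
    by (simp add: power_divide power_mult_distrib)
  then have pp: "(cmod z)\<^sup>2 * (g - r)\<^sup>2 / g\<^sup>2 > 0" using p by (simp only: zero_less_power)
  have "Im z / ((t - Re z)\<^sup>2 + (Im z)\<^sup>2) \<le> Im z / ((cmod z)\<^sup>2 * (g - r)\<^sup>2 / g\<^sup>2)"
    using y le pp by (intro divide_left_mono mult_pos_pos) auto
  also have "\<dots> = Im z * g\<^sup>2 / ((cmod z)\<^sup>2 * (g - r)\<^sup>2)"
    using r by (simp add: field_simps)
  finally show ?thesis .
qed

lemma harm_far:
  assumes y: "Im z > 0" and r: "0 < r" "r < g" and gz: "g \<le> cmod z"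
  shows "harm_meas z (cball 0 r) \<le> ennreal (2 * r * g\<^sup>2 / (pi * (g - r)\<^sup>2) * (Im z / (cmod z)\<^sup>2))"
proof -
  define K where "K = Im z * g\<^sup>2 / ((cmod z)\<^sup>2 * (g - r)\<^sup>2)"
  have K0: "K \<ge> 0" using y unfolding K_def by simp
  have "(\<integral>\<^sup>+ t \<in> {t. complex_of_real t \<in> cball 0 r}. ennreal (Im z / ((t - Re z)\<^sup>2 + (Im z)\<^sup>2)) \<partial>lborel)
      \<le> (\<integral>\<^sup>+ t. ennreal K * indicator {-r..r} t \<partial>lborel)"
    unfolding cball_real_set
    by (intro nn_integral_mono)
       (use poisson_pt_bound[OF y r gz] in \<open>auto simp: K_def intro!: ennreal_leI split: split_indicator\<close>)
  also have "\<dots> = ennreal K * ennreal (2 * r)"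
    using r by (simp add: nn_integral_cmult_indicator)
  finally have "harm_meas z (cball 0 r) \<le> ennreal (1/pi) * (ennreal K * ennreal (2 * r))"
    unfolding harm_meas_def by (intro mult_left_mono) auto
  also have "\<dots> = ennreal (1/pi * K * (2 * r))"
    using K0 r by (simp add: ennreal_mult'[symmetric] mult.assoc)
  also have "1/pi * K * (2 * r) = 2 * r * g\<^sup>2 / (pi * (g - r)\<^sup>2) * (Im z / (cmod z)\<^sup>2)"
    unfolding K_def by (simp add: field_simps)
  finally show ?thesis .
qed



lemma upper_half_borel[measurable]: "upper_half \<in> sets borel"
  unfolding upper_half_def by (rule borel_open) (simp add: open_halfspace_component_gt[where i=\<i>, simplified] open_Collect_less continuous_on_Im continuous_on_const)

lemma lower_half_borel[measurable]: "closed_lower_half \<in> sets borel"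
  unfolding closed_lower_half_def by (rule borel_closed) (simp add: closed_Collect_le continuous_on_Im continuous_on_const)

lemma harm_meas_measurable[measurable]:
  assumes [measurable]: "A \<in> sets borel"
  shows "(\<lambda>z. harm_meas z A) \<in> borel_measurable borel"
  unfolding harm_meas_def by measurable


lemma harm_meas_sum:
  assumes P: "finite P" "disjoint P" "P \<subseteq> sets borel"
  shows "harm_meas z (\<Union>P) = (\<Sum>A\<in>P. harm_meas z A)"
proof -
  have dj: "disjoint_family_on (\<lambda>A. {t::real. complex_of_real t \<in> A}) P"
    using P(2) unfolding disjoint_family_on_def disjoint_def by blast
  have ind: "indicator {t. complex_of_real t \<in> \<Union>P} t = (\<Sum>A\<in>P. indicator {t::real. complex_of_real t \<in> A} t :: ennreal)" for t
  proof -
    have "{t. complex_of_real t \<in> \<Union>P} = (\<Union>A\<in>P. {t. complex_of_real t \<in> A})" by auto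
    then show ?thesis using indicator_UN_disjoint[OF P(1) dj, of t] by simp
  qed
  have meas: "A \<in> P \<Longrightarrow> (\<lambda>t. ennreal (Im z / ((t - Re z)\<^sup>2 + (Im z)\<^sup>2)) * indicator {t. complex_of_real t \<in> A} t) \<in> borel_measurable lborel" for A
    using P(3) by (auto intro!: borel_measurable_times borel_measurable_indicator measurable_sets_borel[of complex_of_real])
  show ?thesis
    unfolding harm_meas_def ind
    by (simp add: sum_distrib_left sum_distrib_right nn_integral_sum[OF meas] mult.assoc)
qed


lemma bal_pos_sum:
  assumes M: "sets M = sets borel"
  assumes P: "finite P" "disjoint P" "P \<subseteq> sets borel"
  shows "bal_pos M (\<Union>P) = (\<Sum>A\<in>P. bal_pos M A)"
proof -
  have meas: "A \<in> P \<Longrightarrow> (\<lambda>z. harm_meas z A * indicator upper_half z) \<in> borel_measurable M" for A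
    using P(3) by (auto simp: measurable_cong_sets[OF M refl])
  have i1: "(\<integral>\<^sup>+ z \<in> upper_half. harm_meas z (\<Union>P) \<partial>M) = (\<Sum>A\<in>P. \<integral>\<^sup>+ z \<in> upper_half. harm_meas z A \<partial>M)"
    unfolding harm_meas_sum[OF P] sum_distrib_right
    by (rule nn_integral_sum[OF meas])
  have dj: "disjoint_family_on (\<lambda>A. A \<inter> closed_lower_half) P"
    using P(2) unfolding disjoint_family_on_def disjoint_def by blast
  have "(\<Sum>A\<in>P. emeasure M (A \<inter> closed_lower_half)) = emeasure M (\<Union>A\<in>P. A \<inter> closed_lower_half)"
    using P(3) by (intro sum_emeasure[OF _ dj P(1)]) (auto simp: M)
  also have "(\<Union>A\<in>P. A \<inter> closed_lower_half) = \<Union>P \<inter> closed_lower_half" by auto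
  finally show ?thesis
    unfolding bal_pos_def i1 sum.distrib by simp
qed

lemma abs_diff_enn: "\<bar>enn2ereal a - enn2ereal b\<bar> \<le> enn2ereal a + enn2ereal b"
proof -
  have a: "enn2ereal a \<ge> 0" and b: "enn2ereal b \<ge> 0" by simp_all
  show ?thesis
    using a b by (cases "enn2ereal a"; cases "enn2ereal b") auto
qed

lemma tot_var_bound:
  assumes "is_charge Mp Mn" "B \<in> sets borel"
  shows "tot_var (bal_charge Mp Mn) B \<le> enn2ereal (bal_pos Mp B + bal_pos Mn B)"
  unfolding tot_var_def
proof (rule SUP_least, clarify)
  fix P assume P: "finite P" "disjoint P" "B = \<Union>P" "P \<subseteq> sets borel"
  have Mp: "sets Mp = sets borel" and Mn: "sets Mn = sets borel" using assms(1) by (auto simp: is_charge_def)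
  have "(\<Sum>A\<in>P. \<bar>bal_charge Mp Mn A\<bar>) \<le> (\<Sum>A\<in>P. enn2ereal (bal_pos Mp A + bal_pos Mn A))"
    unfolding bal_charge_def by (intro sum_mono) (simp add: abs_diff_enn plus_ennreal.rep_eq)
  also have "\<dots> = enn2ereal (\<Sum>A\<in>P. bal_pos Mp A + bal_pos Mn A)"
    by (simp add: sum_enn2ereal)
  also have "\<dots> = enn2ereal (bal_pos Mp B + bal_pos Mn B)"
    using bal_pos_sum[OF Mp P(1,2,4)] bal_pos_sum[OF Mn P(1,2,4)] P(3) by (simp add: sum.distrib)
  finally show "(\<Sum>A\<in>P. \<bar>bal_charge Mp Mn A\<bar>) \<le> enn2ereal (bal_pos Mp (\<Union>P) + bal_pos Mn (\<Union>P))"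
    using P(3) by simp
qed


definition Tm :: "complex measure \<Rightarrow> real \<Rightarrow> ennreal" where
  "Tm M g = (\<integral>\<^sup>+ z. indicator (upper_half \<inter> {z. g \<le> cmod z}) z * ennreal (Im z / (cmod z)\<^sup>2) \<partial>M)"

definition cc :: "real \<Rightarrow> real \<Rightarrow> real" where
  "cc r g = 2 * r * g\<^sup>2 / (pi * (g - r)\<^sup>2)"

lemma cc_nonneg: "0 < r \<Longrightarrow> 0 \<le> cc r g"
  unfolding cc_def by simp

lemma bal_pos_bound:
  assumes M: "sets M = sets borel" and r: "0 < r" "r < g"
  shows "bal_pos M (cball 0 r) \<le> emeasure M (cball 0 g) + ennreal (cc r g) * Tm M g"
proof -
  have Ug[measurable]: "upper_half \<inter> {z. g \<le> cmod z} \<in> sets borel"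
    by (intro sets.Int upper_half_borel borel_closed closed_Collect_le) (auto intro: continuous_intros)
  have Ub[measurable]: "upper_half \<inter> ball 0 g \<in> sets borel" by auto
  have pt: "harm_meas z (cball 0 r) * indicator upper_half z
      \<le> indicator (upper_half \<inter> ball 0 g) z + ennreal (cc r g) * (indicator (upper_half \<inter> {z. g \<le> cmod z}) z * ennreal (Im z / (cmod z)\<^sup>2))" for z
  proof (cases "z \<in> upper_half")
    case False then show ?thesis by simp
  next
    case True
    then have y: "Im z > 0" by (simp add: upper_half_def)
    show ?thesis
    proof (cases "cmod z < g")
      case True
      then show ?thesis using harm_le1[OF y, of "cball 0 r"] \<open>z \<in> upper_half\<close>
        by (simp add: add_increasing2)
    next
      case False
      then have "harm_meas z (cball 0 r) \<le> ennreal (cc r g) * ennreal (Im z / (cmod z)\<^sup>2)"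
        using harm_far[OF y r] r y unfolding cc_def by (simp add: ennreal_mult'[symmetric] cc_def)
      then show ?thesis using \<open>z \<in> upper_half\<close> False by (simp add: add_increasing)
    qed
  qed
  have "(\<integral>\<^sup>+ z \<in> upper_half. harm_meas z (cball 0 r) \<partial>M)
     \<le> (\<integral>\<^sup>+ z. indicator (upper_half \<inter> ball 0 g) z + ennreal (cc r g) * (indicator (upper_half \<inter> {z. g \<le> cmod z}) z * ennreal (Im z / (cmod z)\<^sup>2)) \<partial>M)"
    by (intro nn_integral_mono pt)
  also have "\<dots> = emeasure M (upper_half \<inter> ball 0 g) + ennreal (cc r g) * Tm M g"
    unfolding Tm_def
    by (subst nn_integral_add) (auto simp: measurable_cong_sets[OF M refl] nn_integral_cmult M)
  finally have i: "(\<integral>\<^sup>+ z \<in> upper_half. harm_meas z (cball 0 r) \<partial>M) \<le> emeasure M (upper_half \<inter> ball 0 g) + ennreal (cc r g) * Tm M g" .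
  have "emeasure M (upper_half \<inter> ball 0 g) + emeasure M (cball 0 r \<inter> closed_lower_half)
      = emeasure M ((upper_half \<inter> ball 0 g) \<union> (cball 0 r \<inter> closed_lower_half))"
    by (intro plus_emeasure) (auto simp: M upper_half_def closed_lower_half_def)
  also have "\<dots> \<le> emeasure M (cball 0 g)"
    using r by (intro emeasure_mono) (auto simp: M)
  finally have e: "emeasure M (upper_half \<inter> ball 0 g) + emeasure M (cball 0 r \<inter> closed_lower_half) \<le> emeasure M (cball 0 g)" .
  have "bal_pos M (cball 0 r) \<le> emeasure M (upper_half \<inter> ball 0 g) + ennreal (cc r g) * Tm M g + emeasure M (cball 0 r \<inter> closed_lower_half)"
    unfolding bal_pos_def using i by (rule add_right_mono)
  also have "\<dots> = (emeasure M (upper_half \<inter> ball 0 g) + emeasure M (cball 0 r \<inter> closed_lower_half)) + ennreal (cc r g) * Tm M g"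
    by (simp add: ac_simps)
  also have "\<dots> \<le> emeasure M (cball 0 g) + ennreal (cc r g) * Tm M g"
    using e by (rule add_right_mono)
  finally show ?thesis .
qed


lemma core_bound:
  assumes ch: "is_charge Mp Mn" and r: "0 < r" "r < g"
  shows "tot_var (bal_charge Mp Mn) (cball 0 r) \<le> enn2ereal (absmeas Mp Mn (cball 0 g) + ennreal (cc r g) * (Tm Mp g + Tm Mn g))"
proof -
  have Mp: "sets Mp = sets borel" and Mn: "sets Mn = sets borel" using ch by (auto simp: is_charge_def)
  have "tot_var (bal_charge Mp Mn) (cball 0 r) \<le> enn2ereal (bal_pos Mp (cball 0 r) + bal_pos Mn (cball 0 r))"
    by (rule tot_var_bound[OF ch]) auto
  also have "\<dots> \<le> enn2ereal (absmeas Mp Mn (cball 0 g) + ennreal (cc r g) * (Tm Mp g + Tm Mn g))"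
    unfolding enn2ereal_ennreal less_eq_ennreal.rep_eq[symmetric] absmeas_def
    using add_mono[OF bal_pos_bound[OF Mp r] bal_pos_bound[OF Mn r]]
    by (simp add: distrib_left ac_simps)
  finally show ?thesis .
qed

lemma Im_inv_abs: "\<bar>Im (1 / z)\<bar> = \<bar>Im z\<bar> / (cmod z)\<^sup>2"
proof -
  have "(cmod z)\<^sup>2 = Re z * Re z + Im z * Im z" by (simp only: cmod_power2) (simp add: power2_eq_square)
  then show ?thesis by (simp add: Im_divide abs_divide power2_eq_square)
qed

lemma Tm_le_abs:
  "Tm M g \<le> (\<integral>\<^sup>+ z. indicator {z. cmod z \<ge> g} z * ennreal \<bar>Im (1 / z)\<bar> \<partial>M)"
  unfolding Tm_def
  by (intro nn_integral_mono) (auto simp: Im_inv_abs upper_half_def split: split_indicator)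

lemma part1:
  assumes ch: "is_charge Mp Mn" and r: "0 < r" "r < g"
  shows "tot_var (bal_charge Mp Mn) (cball 0 r)
               \<le> enn2ereal (absmeas Mp Mn (cball 0 g))
                 + ereal (2 * r * g\<^sup>2 / (pi * (g - r)\<^sup>2))
                   * enn2ereal (abs_nn_integral Mp Mn
                       (\<lambda>z. indicator {z. cmod z \<ge> g} z * ennreal \<bar>Im (1 / z)\<bar>))"
proof -
  have "absmeas Mp Mn (cball 0 g) + ennreal (cc r g) * (Tm Mp g + Tm Mn g)
     \<le> absmeas Mp Mn (cball 0 g) + ennreal (cc r g) * abs_nn_integral Mp Mn
                       (\<lambda>z. indicator {z. cmod z \<ge> g} z * ennreal \<bar>Im (1 / z)\<bar>)"
    unfolding abs_nn_integral_def
    by (intro add_left_mono mult_left_mono add_mono Tm_le_abs) auto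
  then have "enn2ereal (absmeas Mp Mn (cball 0 g) + ennreal (cc r g) * (Tm Mp g + Tm Mn g))
     \<le> enn2ereal (absmeas Mp Mn (cball 0 g) + ennreal (cc r g) * abs_nn_integral Mp Mn
                       (\<lambda>z. indicator {z. cmod z \<ge> g} z * ennreal \<bar>Im (1 / z)\<bar>))"
    by (simp add: less_eq_ennreal.rep_eq)
  also have "\<dots> = enn2ereal (absmeas Mp Mn (cball 0 g)) + ereal (cc r g) * enn2ereal (abs_nn_integral Mp Mn
                       (\<lambda>z. indicator {z. cmod z \<ge> g} z * ennreal \<bar>Im (1 / z)\<bar>))"
    using cc_nonneg[OF r(1), of g] by (simp add: plus_ennreal.rep_eq times_ennreal.rep_eq enn2ereal_ennreal)
  finally show ?thesis using core_bound[OF ch r] unfolding cc_def by simp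
qed



lemma Ug_borel[measurable]: "upper_half \<inter> {z. g \<le> cmod z} \<in> sets borel"
  by (intro sets.Int upper_half_borel borel_closed closed_Collect_le) (auto intro: continuous_intros)

lemma Tm_antimono: "g \<le> g' \<Longrightarrow> Tm M g' \<le> Tm M g"
  unfolding Tm_def by (intro nn_integral_mono) (auto split: split_indicator)

lemma Im_inv_cnj: "Im (1 / cnj z) = Im z / (cmod z)\<^sup>2"
proof -
  have "(cmod z)\<^sup>2 = Re z * Re z + Im z * Im z" by (simp only: cmod_power2) (simp add: power2_eq_square)
  then show ?thesis by (simp add: Im_divide power2_eq_square)
qed

lemma Tm_tail:
  assumes M: "sets M = sets borel"
    and fin: "(\<integral>\<^sup>+ z. indicator (upper_half - ball 0 r0) z * ennreal (Im (1 / cnj z)) \<partial>M) < \<infinity>"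
    and d: "\<delta> > 0"
  shows "\<exists>G. \<forall>g\<ge>G. Tm M g \<le> ennreal \<delta>"
proof -
  define f where "f i z = indicator (upper_half \<inter> {z. r0 + real i \<le> cmod z}) z * ennreal (Im z / (cmod z)\<^sup>2)" for i z
  have fm: "f i \<in> borel_measurable M" for i
    unfolding f_def by (simp add: measurable_cong_sets[OF M refl])
  have dec: "decseq f"
    by (rule decseq_SucI) (auto simp: le_fun_def f_def split: split_indicator)
  have f0: "(\<integral>\<^sup>+ z. f 0 z \<partial>M) < \<infinity>"
  proof -
    have "(\<integral>\<^sup>+ z. f 0 z \<partial>M) \<le> (\<integral>\<^sup>+ z. indicator (upper_half - ball 0 r0) z * ennreal (Im (1 / cnj z)) \<partial>M)"
      unfolding f_def by (intro nn_integral_mono) (auto simp: Im_inv_cnj split: split_indicator)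
    then show ?thesis using fin by (simp add: order_le_less_trans)
  qed
  have fin_i: "(\<integral>\<^sup>+ z. f i z \<partial>M) < \<infinity>" for i
  proof -
    have "f i z \<le> f 0 z" for z unfolding f_def by (auto split: split_indicator)
    then have "(\<integral>\<^sup>+ z. f i z \<partial>M) \<le> (\<integral>\<^sup>+ z. f 0 z \<partial>M)" by (intro nn_integral_mono)
    then show ?thesis using f0 by (rule order_le_less_trans)
  qed
  have inf0: "(INF i. f i z) = 0" for z
  proof -
    obtain n :: nat where "cmod z - r0 < real n" using reals_Archimedean2 by blast
    then have "f n z = 0" unfolding f_def by (auto split: split_indicator)
    then have "(INF i. f i z) \<le> 0" by (intro INF_lower2[of n]) auto
    then show ?thesis by simp
  qed
  have "(INF i. integral\<^sup>N M (f i)) = (\<integral>\<^sup>+ z. (INF i. f i z) \<partial>M)"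
    using nn_integral_monotone_convergence_INF_decseq[OF dec fm fin_i] by simp
  also have "\<dots> = 0" by (simp add: inf0)
  finally have "(INF i. integral\<^sup>N M (f i)) < ennreal \<delta>" using d by simp
  then obtain i where i: "integral\<^sup>N M (f i) < ennreal \<delta>" by (auto simp: INF_less_iff)
  have "\<forall>g\<ge>r0 + real i. Tm M g \<le> ennreal \<delta>"
  proof (intro allI impI)
    fix g assume "r0 + real i \<le> g"
    then have "Tm M g \<le> Tm M (r0 + real i)" by (rule Tm_antimono)
    also have "Tm M (r0 + real i) = integral\<^sup>N M (f i)" unfolding Tm_def f_def by simp
    finally show "Tm M g \<le> ennreal \<delta>" using i by simp
  qed
  then show ?thesis by blast
qed


lemma dy_identity:
  fixes C g p :: real and k :: nat
  assumes g: "g > 0"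
  shows "C * ((2::real)^Suc k * g) powr p / (2^k * g) = C * 2 powr p * g powr (p - 1) * (2 powr (p - 1))^k"
proof -
  have e1: "((2::real)^Suc k * g) powr p = 2 powr p * 2 powr (real k * p) * g powr p"
    using g by (simp add: powr_mult powr_realpow[symmetric] powr_powr powr_add[symmetric] algebra_simps)
  have "(2 powr (p - 1))^k = (2::real) powr (real k * (p - 1))"
    by (subst powr_power) simp_all
  also have "\<dots> = 2 powr (real k * p) / 2 powr (real k)"
    by (simp add: powr_diff[symmetric] algebra_simps)
  finally have e2: "(2 powr (p - 1))^k = 2 powr (real k * p) / 2 ^ k"
    by (simp add: powr_realpow)
  have e3: "g powr (p - 1) = g powr p / g" using g by (simp add: powr_diff)
  show ?thesis unfolding e1 e2 e3 using g by (simp add: field_simps)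
qed

lemma ann_cover:
  fixes g :: real
  assumes g: "g > 0" and z: "g \<le> cmod z"
  shows "\<exists>k. 2^k * g \<le> cmod z \<and> cmod z < 2^Suc k * g"
proof -
  obtain n :: nat where "cmod z / g < 2^n" using real_arch_pow[of 2 "cmod z / g"] by auto
  then have ex: "cmod z < 2^n * g" using g by (simp add: field_simps)
  define n0 where "n0 = (LEAST n::nat. cmod z < 2^n * g)"
  have n0: "cmod z < 2^n0 * g" unfolding n0_def by (rule LeastI[of _ n]) (rule ex)
  have "n0 \<noteq> 0"
  proof
    assume "n0 = 0"
    then have "cmod z < g" using n0 by simp
    then show False using z by simp
  qed
  then obtain k where k: "n0 = Suc k" by (cases n0) auto
  have "\<not> cmod z < 2^k * g" using not_less_Least[of k "\<lambda>n. cmod z < 2^n * g"] k unfolding n0_def by simp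
  then show ?thesis using n0 k by (intro exI[of _ k]) simp
qed

lemma ann_disj:
  fixes g :: real
  assumes g: "g > 0"
  shows "disjoint_family (\<lambda>k. {z::complex. 2^k * g \<le> cmod z \<and> cmod z < 2^Suc k * g})"
proof -
  have *: "m < n \<Longrightarrow> {z::complex. 2^m * g \<le> cmod z \<and> cmod z < 2^Suc m * g} \<inter> {z. 2^n * g \<le> cmod z \<and> cmod z < 2^Suc n * g} = {}" for m n :: nat
  proof -
    assume "m < n"
    then have "(2::real)^Suc m \<le> 2^n" by (intro power_increasing) auto
    then have "2^Suc m * g \<le> 2^n * g" using g by (intro mult_right_mono) auto
    then show ?thesis by auto
  qed
  show ?thesis unfolding disjoint_family_on_def
  proof (intro ballI impI)
    fix m n :: nat assume "m \<noteq> n"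
    then consider "m < n" | "n < m" by linarith
    then show "{z::complex. 2^m * g \<le> cmod z \<and> cmod z < 2^Suc m * g} \<inter> {z. 2^n * g \<le> cmod z \<and> cmod z < 2^Suc n * g} = {}"
    proof cases
      case 1 then show ?thesis by (rule *)
    next
      case 2 then show ?thesis using *[OF 2] by blast
    qed
  qed
qed


lemma dyadic:
  assumes M: "sets M = sets borel" and p: "0 \<le> p" "p < 1" and C: "C \<ge> 0" and S: "S > 0"
    and bnd: "\<And>s. s \<ge> S \<Longrightarrow> emeasure M (cball 0 s) \<le> ennreal (C * s powr p)" and g: "g \<ge> S"
  shows "Tm M g \<le> ennreal (C * 2 powr p / (1 - 2 powr (p - 1)) * g powr (p - 1))"
proof -
  have g0: "g > 0" using S g by simp
  define ann where "ann k = {z::complex. 2^k * g \<le> cmod z \<and> cmod z < 2^Suc k * g}" for k :: nat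
  define K where "K = C * 2 powr p * g powr (p - 1)"
  define q :: real where "q = 2 powr (p - 1)"
  have q: "0 < q" "q < 1" unfolding q_def using p by (auto simp: powr_less_one)
  have K0: "K \<ge> 0" unfolding K_def using C by simp
  have annm[measurable]: "ann k \<in> sets borel" for k
    unfolding ann_def by measurable
  have dj: "disjoint_family ann" unfolding ann_def by (rule ann_disj[OF g0])
  have un: "(\<Union>k. ann k) = {z. g \<le> cmod z}"
  proof
    show "(\<Union>k. ann k) \<subseteq> {z. g \<le> cmod z}"
    proof clarify
      fix k z assume "z \<in> ann k"
      then have "2^k * g \<le> cmod z" unfolding ann_def by simp
      moreover have "g \<le> 2^k * g" using g0 by simp
      ultimately show "g \<le> cmod z" by linarith
    qed
    show "{z. g \<le> cmod z} \<subseteq> (\<Union>k. ann k)"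
      using ann_cover[OF g0] unfolding ann_def by blast
  qed
  have "Tm M g \<le> (\<integral>\<^sup>+ z. indicator {z. g \<le> cmod z} z * ennreal (1 / cmod z) \<partial>M)"
    unfolding Tm_def
  proof (intro nn_integral_mono)
    fix z
    show "indicator (upper_half \<inter> {z. g \<le> cmod z}) z * ennreal (Im z / (cmod z)\<^sup>2)
         \<le> indicator {z. g \<le> cmod z} z * ennreal (1 / cmod z)"
    proof (cases "z \<in> upper_half \<and> g \<le> cmod z")
      case True
      then have cz: "cmod z > 0" using g0 by linarith
      have "Im z / (cmod z)\<^sup>2 \<le> cmod z / (cmod z)\<^sup>2"
        using abs_Im_le_cmod[of z] cz by (intro divide_right_mono) auto
      also have "\<dots> = 1 / cmod z" using cz by (simp add: power2_eq_square)
      finally show ?thesis using True by (auto intro: ennreal_leI)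
    qed (auto split: split_indicator)
  qed
  also have "\<dots> = (\<integral>\<^sup>+ z. (\<Sum>k. indicator (ann k) z * ennreal (1 / cmod z)) \<partial>M)"
    by (simp add: suminf_indicator[OF dj] un)
  also have "\<dots> = (\<Sum>k. \<integral>\<^sup>+ z. indicator (ann k) z * ennreal (1 / cmod z) \<partial>M)"
    by (rule nn_integral_suminf) (simp add: measurable_cong_sets[OF M refl])
  also have "\<dots> \<le> (\<Sum>k. ennreal (K * q^k))"
  proof (intro suminf_le summableI)
    fix k :: nat
    have "(\<integral>\<^sup>+ z. indicator (ann k) z * ennreal (1 / cmod z) \<partial>M)
        \<le> (\<integral>\<^sup>+ z. ennreal (1 / (2^k * g)) * indicator (cball 0 (2^Suc k * g)) z \<partial>M)"
    proof (intro nn_integral_mono)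
      fix z
      show "indicator (ann k) z * ennreal (1 / cmod z) \<le> ennreal (1 / (2^k * g)) * indicator (cball 0 (2^Suc k * g)) z"
      proof (cases "z \<in> ann k")
        case True
        then have a: "2^k * g \<le> cmod z" "cmod z < 2^Suc k * g" unfolding ann_def by auto
        have p2: "2^k * g > 0" using g0 by simp
        then have "cmod z > 0" using a by linarith
        then have "1 / cmod z \<le> 1 / (2^k * g)" using a p2 g0 by (intro divide_left_mono mult_pos_pos) auto
        then show ?thesis using True a by (auto intro: ennreal_leI)
      qed simp
    qed
    also have "\<dots> = ennreal (1 / (2^k * g)) * emeasure M (cball 0 (2^Suc k * g))"
      by (rule nn_integral_cmult_indicator) (simp add: M)
    also have "\<dots> \<le> ennreal (1 / (2^k * g)) * ennreal (C * (2^Suc k * g) powr p)"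
    proof (intro mult_left_mono bnd)
      have "(1::real) \<le> 2^Suc k" by (rule one_le_power) simp
      then have "g \<le> 2^Suc k * g" using g0 by simp
      then show "S \<le> 2^Suc k * g" using g by linarith
    qed simp
    also have "\<dots> = ennreal (C * (2^Suc k * g) powr p / (2^k * g))"
      using C g0 by (simp add: ennreal_mult'[symmetric])
    also have "\<dots> = ennreal (K * q^k)"
      unfolding dy_identity[OF g0] K_def q_def by simp
    finally show "(\<integral>\<^sup>+ z. indicator (ann k) z * ennreal (1 / cmod z) \<partial>M) \<le> ennreal (K * q^k)" .
  qed
  also have "(\<Sum>k. ennreal (K * q^k)) = ennreal (K * (1 / (1 - q)))"
    using K0 q by (intro suminf_ennreal_eq sums_mult geometric_sums) auto
  also have "K * (1 / (1 - q)) = C * 2 powr p / (1 - 2 powr (p - 1)) * g powr (p - 1)"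
    unfolding K_def q_def by simp
  finally show ?thesis .
qed



lemma absmeas_fin:
  assumes "is_charge Mp Mn"
  shows "absmeas Mp Mn (cball 0 s) < \<infinity>"
  using assms unfolding is_charge_def absmeas_def by auto

lemma bound_real:
  assumes ch: "is_charge Mp Mn" and r: "0 < r" "r < g"
    and X: "absmeas Mp Mn (cball 0 g) \<le> ennreal X" and Y: "Tm Mp g + Tm Mn g \<le> ennreal Y"
    and X0: "X \<ge> 0" and Y0: "Y \<ge> 0"
  shows "tot_var (bal_charge Mp Mn) (cball 0 r) \<le> ereal (X + cc r g * Y)"
proof -
  have c0: "cc r g \<ge> 0" using cc_nonneg[OF r(1)] .
  have "absmeas Mp Mn (cball 0 g) + ennreal (cc r g) * (Tm Mp g + Tm Mn g) \<le> ennreal X + ennreal (cc r g) * ennreal Y"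
    using X Y by (intro add_mono mult_left_mono) auto
  also have "\<dots> = ennreal (X + cc r g * Y)"
  proof -
    have "ennreal (cc r g * Y) = ennreal (cc r g) * ennreal Y" by (rule ennreal_mult) (use c0 Y0 in auto)
    moreover have "ennreal (X + cc r g * Y) = ennreal X + ennreal (cc r g * Y)" by (rule ennreal_plus) (use X0 c0 Y0 in auto)
    ultimately show ?thesis by simp
  qed
  finally have "enn2ereal (absmeas Mp Mn (cball 0 g) + ennreal (cc r g) * (Tm Mp g + Tm Mn g)) \<le> enn2ereal (ennreal (X + cc r g * Y))"
    by (rule less_eq_ennreal.rep_eq[THEN iffD1])
  also have "\<dots> = ereal (X + cc r g * Y)" using X0 Y0 c0 by (intro enn2ereal_ennreal) simp
  finally show ?thesis using core_bound[OF ch r] by (rule order_trans[rotated])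
qed

lemma limsup_to_bound:
  assumes ch: "is_charge Mp Mn"
    and lt: "Limsup at_top (\<lambda>r. enn2ereal (absmeas Mp Mn (cball 0 r)) / ereal (r powr p)) < ereal L'"
  shows "\<exists>S>0. \<forall>s\<ge>S. absmeas Mp Mn (cball 0 s) \<le> ennreal (L' * s powr p)"
proof -
  have "eventually (\<lambda>r. enn2ereal (absmeas Mp Mn (cball 0 r)) / ereal (r powr p) < ereal L') at_top"
    by (rule Limsup_lessD[OF lt])
  then obtain S where S: "\<And>s. s \<ge> S \<Longrightarrow> enn2ereal (absmeas Mp Mn (cball 0 s)) / ereal (s powr p) < ereal L'"
    by (auto simp: eventually_at_top_linorder)
  have "\<forall>s\<ge>max S 1. absmeas Mp Mn (cball 0 s) \<le> ennreal (L' * s powr p)"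
  proof (intro allI impI)
    fix s assume s: "max S 1 \<le> s"
    then have s0: "s > 0" by simp
    obtain a where a: "absmeas Mp Mn (cball 0 s) = ennreal a" "a \<ge> 0"
      using absmeas_fin[OF ch, of s] by (cases "absmeas Mp Mn (cball 0 s)") auto
    have sp: "s powr p > 0" using s0 by simp
    have "ereal a / ereal (s powr p) < ereal L'" using S[of s] s a by (simp add: enn2ereal_ennreal)
    then have "a / s powr p < L'" using sp by simp
    then have "a < L' * s powr p" using sp by (simp add: divide_less_eq)
    then show "absmeas Mp Mn (cball 0 s) \<le> ennreal (L' * s powr p)" using a by (simp add: ennreal_leI)
  qed
  then show ?thesis by (intro exI[of _ "max S 1"]) auto
qed

lemma bound_to_limsup:
  assumes "\<And>r. r \<ge> R \<Longrightarrow> F r \<le> ereal (Q * r powr p)"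
  shows "Limsup at_top (\<lambda>r. F r / ereal (r powr p)) \<le> ereal Q"
proof (rule Limsup_bounded)
  have "\<forall>r\<ge>max R 1. F r / ereal (r powr p) \<le> ereal Q"
  proof (intro allI impI)
    fix r :: real assume r: "max R 1 \<le> r"
    then have sp: "r powr p > 0" by simp
    have "F r / ereal (r powr p) \<le> ereal (Q * r powr p) / ereal (r powr p)"
      using assms[of r] r sp by (intro ereal_divide_right_mono) auto
    also have "\<dots> = ereal Q" using sp by simp
    finally show "F r / ereal (r powr p) \<le> ereal Q" .
  qed
  then show "eventually (\<lambda>r. F r / ereal (r powr p) \<le> ereal Q) at_top"
    unfolding eventually_at_top_linorder by blast
qed


lemma choose_eta:
  fixes L p \<epsilon> :: real
  assumes e: "\<epsilon> > 0"
  shows "\<exists>\<eta>. 0 < \<eta> \<and> \<eta> < 1 \<and> (L + \<eta>) * (1 + \<eta>) powr p + \<eta> < L + \<epsilon>"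
proof -
  have "((\<lambda>\<eta>. (L + \<eta>) * (1 + \<eta>) powr p + \<eta>) \<longlongrightarrow> (L + 0) * (1 + 0) powr p + 0) (at_right (0::real))"
    by (intro tendsto_intros) auto
  then have t: "((\<lambda>\<eta>. (L + \<eta>) * (1 + \<eta>) powr p + \<eta>) \<longlongrightarrow> L) (at_right (0::real))" by simp
  have "eventually (\<lambda>\<eta>. (L + \<eta>) * (1 + \<eta>) powr p + \<eta> < L + \<epsilon>) (at_right (0::real))"
    using order_tendstoD(2)[OF t, of "L + \<epsilon>"] e by simp
  then obtain b where b: "b > 0" "\<And>y. y > 0 \<Longrightarrow> y < b \<Longrightarrow> (L + y) * (1 + y) powr p + y < L + \<epsilon>"
    by (auto simp: eventually_at_right_field)
  define y where "y = min (b/2) (1/2)"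
  have "y > 0" "y < b" "y < 1" using b unfolding y_def by auto
  then show ?thesis using b(2)[of y] by blast
qed

lemma T_tail_both:
  assumes ch: "is_charge Mp Mn" and bl: "blaschke_upper Mp Mn" and d: "\<delta> > 0"
  shows "\<exists>G. \<forall>g\<ge>G. Tm Mp g + Tm Mn g \<le> ennreal \<delta>"
proof -
  have Mp: "sets Mp = sets borel" and Mn: "sets Mn = sets borel" using ch by (auto simp: is_charge_def)
  obtain r0 where r0: "abs_nn_integral Mp Mn (\<lambda>z. indicator (upper_half - ball 0 r0) z * ennreal (Im (1 / cnj z))) < \<infinity>"
    using bl unfolding blaschke_upper_def by blast
  have f1: "(\<integral>\<^sup>+ z. indicator (upper_half - ball 0 r0) z * ennreal (Im (1 / cnj z)) \<partial>Mp) < \<infinity>"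
    and f2: "(\<integral>\<^sup>+ z. indicator (upper_half - ball 0 r0) z * ennreal (Im (1 / cnj z)) \<partial>Mn) < \<infinity>"
    using r0 unfolding abs_nn_integral_def by auto
  have d2: "\<delta>/2 > 0" using d by simp
  obtain G1 where G1: "\<And>g. g \<ge> G1 \<Longrightarrow> Tm Mp g \<le> ennreal (\<delta>/2)" using Tm_tail[OF Mp f1 d2] by blast
  obtain G2 where G2: "\<And>g. g \<ge> G2 \<Longrightarrow> Tm Mn g \<le> ennreal (\<delta>/2)" using Tm_tail[OF Mn f2 d2] by blast
  have "\<forall>g\<ge>max G1 G2. Tm Mp g + Tm Mn g \<le> ennreal \<delta>"
  proof (intro allI impI)
    fix g assume "max G1 G2 \<le> g"
    then have "Tm Mp g + Tm Mn g \<le> ennreal (\<delta>/2) + ennreal (\<delta>/2)" using G1 G2 by (intro add_mono) auto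
    also have "\<dots> = ennreal \<delta>" using d by (simp flip: ennreal_plus)
    finally show "Tm Mp g + Tm Mn g \<le> ennreal \<delta>" .
  qed
  then show ?thesis by blast
qed

lemma A_nonneg: "r > 0 \<Longrightarrow> 0 \<le> enn2ereal x / ereal (r powr p)"
  using ereal_divide_right_mono[of 0 "enn2ereal x" "ereal (r powr p)"] by simp


lemma part2_ge1:
  assumes ch: "is_charge Mp Mn" and bl: "blaschke_upper Mp Mn" and p: "p \<ge> 1"
    and fin: "Limsup at_top (\<lambda>r. enn2ereal (absmeas Mp Mn (cball 0 r)) / ereal (r powr p)) < \<infinity>"
  shows "Limsup at_top (\<lambda>r. tot_var (bal_charge Mp Mn) (cball 0 r) / ereal (r powr p))
         \<le> Limsup at_top (\<lambda>r. enn2ereal (absmeas Mp Mn (cball 0 r)) / ereal (r powr p))"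
proof -
  define LA where "LA = Limsup at_top (\<lambda>r. enn2ereal (absmeas Mp Mn (cball 0 r)) / ereal (r powr p))"
  have "0 \<le> LA" unfolding LA_def
  proof (rule le_Limsup)
    show "eventually (\<lambda>r. 0 \<le> enn2ereal (absmeas Mp Mn (cball 0 r)) / ereal (r powr p)) at_top"
      using eventually_gt_at_top[of "0::real"] by eventually_elim (rule A_nonneg)
  qed simp
  with fin obtain L where L: "LA = ereal L" "L \<ge> 0" unfolding LA_def[symmetric]
    by (cases LA) auto
  show ?thesis unfolding LA_def[symmetric] L(1)
  proof (rule ereal_le_epsilon2)
    fix \<epsilon> :: real assume e: "0 < \<epsilon>"
    obtain \<eta> where eta: "0 < \<eta>" "\<eta> < 1" "(L + \<eta>) * (1 + \<eta>) powr p + \<eta> < L + \<epsilon>"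
      using choose_eta[OF e, of L p] by blast
    have "LA < ereal (L + \<eta>)" using L eta by simp
    then obtain S where S: "S > 0" "\<And>s. s \<ge> S \<Longrightarrow> absmeas Mp Mn (cball 0 s) \<le> ennreal ((L + \<eta>) * s powr p)"
      using limsup_to_bound[OF ch, of p "L + \<eta>"] unfolding LA_def by blast
    define K where "K = 2 * (1 + \<eta>)\<^sup>2 / (pi * \<eta>\<^sup>2)"
    have K: "K > 0" unfolding K_def using eta by simp
    define \<delta> where "\<delta> = \<eta> / K"
    have d: "\<delta> > 0" unfolding \<delta>_def using K eta by simp
    obtain G where G: "\<And>g. g \<ge> G \<Longrightarrow> Tm Mp g + Tm Mn g \<le> ennreal \<delta>"
      using T_tail_both[OF ch bl d] by blast
    have bnd: "tot_var (bal_charge Mp Mn) (cball 0 r) \<le> ereal ((L + \<epsilon>) * r powr p)" if r: "r \<ge> max (max S G) 1" for r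
    proof -
      define g where "g = (1 + \<eta>) * r"
      have r0: "r > 0" "r \<ge> 1" using r by auto
      have rg: "r < g" unfolding g_def using r0 eta by simp
      have gS: "g \<ge> S" "g \<ge> G" using rg r by auto
      have "tot_var (bal_charge Mp Mn) (cball 0 r) \<le> ereal ((L + \<eta>) * g powr p + cc r g * \<delta>)"
        using L eta d by (intro bound_real[OF ch r0(1) rg S(2)[OF gS(1)] G[OF gS(2)]]) auto
      also have "(L + \<eta>) * g powr p + cc r g * \<delta> \<le> (L + \<epsilon>) * r powr p"
      proof -
        have ccr: "cc r g = K * r" unfolding cc_def K_def g_def using r0 eta
          by (simp add: field_simps power2_eq_square)
        have "cc r g * \<delta> = \<eta> * r" unfolding ccr \<delta>_def using K by simp
        also have "\<dots> \<le> \<eta> * r powr p"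
        proof -
          have "r powr 1 \<le> r powr p" using r0 p by (intro powr_mono) auto
          then show ?thesis using eta r0 by (intro mult_left_mono) auto
        qed
        finally have a: "cc r g * \<delta> \<le> \<eta> * r powr p" .
        have b: "(L + \<eta>) * g powr p = (L + \<eta>) * (1 + \<eta>) powr p * r powr p"
          unfolding g_def using eta r0 by (simp add: powr_mult)
        have c: "((L + \<eta>) * (1 + \<eta>) powr p + \<eta>) * r powr p \<le> (L + \<epsilon>) * r powr p"
          using eta(3) r0 by (intro mult_right_mono) auto
        show ?thesis using a b c by (simp add: algebra_simps)
      qed
      finally show ?thesis by simp
    qed
    have "Limsup at_top (\<lambda>r. tot_var (bal_charge Mp Mn) (cball 0 r) / ereal (r powr p)) \<le> ereal (L + \<epsilon>)"
      by (rule bound_to_limsup[of "max (max S G) 1"]) (rule bnd)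
    then show "Limsup at_top (\<lambda>r. tot_var (bal_charge Mp Mn) (cball 0 r) / ereal (r powr p)) \<le> ereal L + ereal \<epsilon>"
      by simp
  qed
qed


lemma part2_lt1:
  assumes ch: "is_charge Mp Mn" and p: "0 \<le> p" "p < 1"
    and fin: "Limsup at_top (\<lambda>r. enn2ereal (absmeas Mp Mn (cball 0 r)) / ereal (r powr p)) < \<infinity>"
  shows "Limsup at_top (\<lambda>r. tot_var (bal_charge Mp Mn) (cball 0 r) / ereal (r powr p)) < \<infinity>"
proof -
  have Mp: "sets Mp = sets borel" and Mn: "sets Mn = sets borel" using ch by (auto simp: is_charge_def)
  define LA where "LA = Limsup at_top (\<lambda>r. enn2ereal (absmeas Mp Mn (cball 0 r)) / ereal (r powr p))"
  obtain L' where L': "LA < ereal L'" "L' > 0"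
  proof (cases LA)
    case (real c) then show ?thesis using that[of "max c 0 + 1"] by simp
  next
    case PInf then show ?thesis using fin unfolding LA_def by simp
  next
    case MInf then show ?thesis using that[of 1] by simp
  qed
  obtain S where S: "S > 0" "\<And>s. s \<ge> S \<Longrightarrow> absmeas Mp Mn (cball 0 s) \<le> ennreal (L' * s powr p)"
    using limsup_to_bound[OF ch, of p L'] L' unfolding LA_def by blast
  have bp: "emeasure Mp (cball 0 s) \<le> ennreal (L' * s powr p)" if "s \<ge> S" for s
    using S(2)[OF that] unfolding absmeas_def by (rule order_trans[rotated]) simp
  have bn: "emeasure Mn (cball 0 s) \<le> ennreal (L' * s powr p)" if "s \<ge> S" for s
    using S(2)[OF that] unfolding absmeas_def by (rule order_trans[rotated]) simp
  define D0 where "D0 = L' * 2 powr p / (1 - 2 powr (p - 1))"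
  have q1: "2 powr (p - 1) < (1::real)" using p by (simp add: powr_less_one)
  have D0: "D0 \<ge> 0" unfolding D0_def using L' q1 by simp
  define Q where "Q = L' * 2 powr p + 8 / pi * (2 * D0 * 2 powr (p - 1))"
  have bnd: "tot_var (bal_charge Mp Mn) (cball 0 r) \<le> ereal (Q * r powr p)" if r: "r \<ge> S" for r
  proof -
    define g where "g = 2 * r"
    have r0: "r > 0" using r S by simp
    have rg: "r < g" unfolding g_def using r0 by simp
    have gS: "g \<ge> S" using rg r by simp
    have T: "Tm Mp g + Tm Mn g \<le> ennreal (2 * D0 * g powr (p - 1))"
    proof -
      have "Tm Mp g + Tm Mn g \<le> ennreal (D0 * g powr (p - 1)) + ennreal (D0 * g powr (p - 1))"
        unfolding D0_def
        by (intro add_mono dyadic[OF Mp p _ S(1) bp gS] dyadic[OF Mn p _ S(1) bn gS]) (use L' in auto)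
      also have "\<dots> = ennreal (2 * D0 * g powr (p - 1))"
        using D0 by (simp flip: ennreal_plus)
      finally show ?thesis .
    qed
    have "tot_var (bal_charge Mp Mn) (cball 0 r) \<le> ereal (L' * g powr p + cc r g * (2 * D0 * g powr (p - 1)))"
      using L' D0 by (intro bound_real[OF ch r0 rg S(2)[OF gS] T]) auto
    also have "L' * g powr p + cc r g * (2 * D0 * g powr (p - 1)) = Q * r powr p"
    proof -
      have c: "cc r g = 8 / pi * r" unfolding cc_def g_def using r0 by (simp add: field_simps power2_eq_square)
      have g1: "g powr p = 2 powr p * r powr p" unfolding g_def using r0 by (simp add: powr_mult)
      have g2: "g powr (p - 1) = 2 powr (p - 1) * r powr (p - 1)" unfolding g_def using r0 by (simp add: powr_mult)
      have rr: "r * r powr (p - 1) = r powr p"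
        using r0 by (simp add: powr_diff)
      show ?thesis unfolding c g1 g2 Q_def
        using rr by (simp add: algebra_simps)
    qed
    finally show ?thesis .
  qed
  have "Limsup at_top (\<lambda>r. tot_var (bal_charge Mp Mn) (cball 0 r) / ereal (r powr p)) \<le> ereal Q"
    by (rule bound_to_limsup[of S]) (rule bnd)
  moreover have "ereal Q < \<infinity>" by simp
  ultimately show ?thesis by (rule order_le_less_trans)
qed


theorem proposition11:
  fixes Mp Mn :: "complex measure"
  assumes charge: "is_charge Mp Mn"
    and blaschke: "blaschke_upper Mp Mn"
  shows "(\<forall>g :: real \<Rightarrow> real. (\<forall>r\<ge>0. g r \<ge> 0) \<and> (\<forall>r>0. g r > r) \<longrightarrow>
            (\<forall>r>0. tot_var (bal_charge Mp Mn) (cball 0 r)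
               \<le> enn2ereal (absmeas Mp Mn (cball 0 (g r)))
                 + ereal (2 * r * (g r)\<^sup>2 / (pi * (g r - r)\<^sup>2))
                   * enn2ereal (abs_nn_integral Mp Mn
                       (\<lambda>z. indicator {z. cmod z \<ge> g r} z * ennreal \<bar>Im (1 / z)\<bar>))))
       \<and> (\<forall>p::real. p \<ge> 0 \<and>
            Limsup at_top (\<lambda>r. enn2ereal (absmeas Mp Mn (cball 0 r)) / ereal (r powr p)) < \<infinity>
            \<longrightarrow> Limsup at_top (\<lambda>r. tot_var (bal_charge Mp Mn) (cball 0 r) / ereal (r powr p)) < \<infinity>
              \<and> (p \<ge> 1 \<longrightarrow>
                   Limsup at_top (\<lambda>r. tot_var (bal_charge Mp Mn) (cball 0 r) / ereal (r powr p))
                   \<le> Limsup at_top (\<lambda>r. enn2ereal (absmeas Mp Mn (cball 0 r)) / ereal (r powr p))))"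
proof (intro conjI allI impI)
  fix g :: "real \<Rightarrow> real" and r :: real
  assume g: "(\<forall>r\<ge>0. g r \<ge> 0) \<and> (\<forall>r>0. g r > r)" and r: "r > 0"
  then have "r < g r" by blast
  then show "tot_var (bal_charge Mp Mn) (cball 0 r)
               \<le> enn2ereal (absmeas Mp Mn (cball 0 (g r)))
                 + ereal (2 * r * (g r)\<^sup>2 / (pi * (g r - r)\<^sup>2))
                   * enn2ereal (abs_nn_integral Mp Mn
                       (\<lambda>z. indicator {z. cmod z \<ge> g r} z * ennreal \<bar>Im (1 / z)\<bar>))"
    by (rule part1[OF charge r])
next
  fix p :: real
  assume h: "p \<ge> 0 \<and> Limsup at_top (\<lambda>r. enn2ereal (absmeas Mp Mn (cball 0 r)) / ereal (r powr p)) < \<infinity>"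
  show "Limsup at_top (\<lambda>r. tot_var (bal_charge Mp Mn) (cball 0 r) / ereal (r powr p)) < \<infinity>"
  proof (cases "p < 1")
    case True
    then show ?thesis using part2_lt1[OF charge _ True] h by blast
  next
    case False
    then have "p \<ge> 1" by simp
    then show ?thesis using part2_ge1[OF charge blaschke] h by (blast intro: order_le_less_trans)
  qed
  assume "p \<ge> 1"
  then show "Limsup at_top (\<lambda>r. tot_var (bal_charge Mp Mn) (cball 0 r) / ereal (r powr p))
                   \<le> Limsup at_top (\<lambda>r. enn2ereal (absmeas Mp Mn (cball 0 r)) / ereal (r powr p))"
    using part2_ge1[OF charge blaschke] h by blast
qed

end
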